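(* Let $R$ be a Hermite ring and $X$ a (commuting) indeterminate over $R$ such that the formal power series ring $R[[X]]$ is a Bézout ring. Then $R[[X]]$ is a Hermite ring.
   Context: A matrix $A$ over a ring admits a diagonal reduction if there are invertible matrices $P,Q$ with $PAQ$ diagonal (i.e. entries $a_{ij}=0$ for $i\neq j$). A ring is right Hermite if every $1\times 2$ matrix over it admits a diagonal reduction (left Hermite: every $2\times 1$ matrix). Here "Hermite" means right Hermite. A ring is Bézout if every finitely generated ideal is principal. *)

theory Defs
  imports "Jordan_Normal_Form.Matrix" "HOL-Computational_Algebra.Formal_Power_Series"
begin

definition admits_diagonal_reduction :: "'a::ring_1 mat \<Rightarrow> bool" where
  "admits_diagonal_reduction A \<longleftrightarrow>
     (\<exists>P Q. P \<in> carrier_mat (dim_row A) (dim_row A) \<and> Q \<in> carrier_mat (dim_col A) (dim_col A) \<and>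
            invertible_mat P \<and> invertible_mat Q \<and> diagonal_mat (P * A * Q))"

definition hermite_ring :: "'a::ring_1 itself \<Rightarrow> bool" where
  "hermite_ring TYPE('a) \<longleftrightarrow>
     (\<forall>A :: 'a mat. A \<in> carrier_mat 1 2 \<longrightarrow> admits_diagonal_reduction A)"

definition right_ideal :: "'a::ring_1 set \<Rightarrow> bool" where
  "right_ideal I \<longleftrightarrow> 0 \<in> I \<and> (\<forall>x\<in>I. \<forall>y\<in>I. x + y \<in> I) \<and> (\<forall>x\<in>I. - x \<in> I)
     \<and> (\<forall>x\<in>I. \<forall>r. x * r \<in> I)"

definition right_ideal_gen :: "'a::ring_1 set \<Rightarrow> 'a set" where
  "right_ideal_gen S = \<Inter>{I. right_ideal I \<and> S \<subseteq> I}"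

definition bezout_ring :: "'a::ring_1 itself \<Rightarrow> bool" where
  "bezout_ring TYPE('a) \<longleftrightarrow>
     (\<forall>S :: 'a set. finite S \<longrightarrow> (\<exists>d. right_ideal_gen S = right_ideal_gen {d}))"

end

theory Submission
  imports Defs
begin

definition mat2 :: "'a \<Rightarrow> 'a \<Rightarrow> 'a \<Rightarrow> 'a \<Rightarrow> 'a mat" where
  "mat2 p q r s = mat 2 2 (\<lambda>(i,j). if i = 0 then (if j = 0 then p else q) else (if j = 0 then r else s))"

definition row1 :: "'a \<Rightarrow> 'a \<Rightarrow> 'a mat" where
  "row1 p q = mat 1 2 (\<lambda>(i,j). if j = 0 then p else q)"

lemma less2: "(i::nat) < 2 \<longleftrightarrow> i = 0 \<or> i = 1" by auto

lemma mat2_carrier[simp]: "mat2 p q r s \<in> carrier_mat 2 2"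
  by (simp add: mat2_def)

lemma mat2_dims[simp]: "dim_row (mat2 p q r s) = 2" "dim_col (mat2 p q r s) = 2"
  by (simp_all add: mat2_def)

lemma row1_carrier[simp]: "row1 p q \<in> carrier_mat 1 2"
  by (simp add: row1_def)

lemma mat2_mult:
  fixes a :: "'a::semiring_1"
  shows "mat2 a b c d * mat2 e f g h = mat2 (a*e+b*g) (a*f+b*h) (c*e+d*g) (c*f+d*h)"
  by (rule eq_matI) (auto simp: mat2_def scalar_prod_def less2 numeral_2_eq_2)

lemma row1_mult:
  fixes a :: "'a::semiring_1"
  shows "row1 a b * mat2 e f g h = row1 (a*e+b*g) (a*f+b*h)"
  by (rule eq_matI) (auto simp: mat2_def row1_def scalar_prod_def less2 numeral_2_eq_2)

lemma mat2_eta: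
  assumes "M \<in> carrier_mat 2 2"
  shows "M = mat2 (M$$(0,0)) (M$$(0,1)) (M$$(1,0)) (M$$(1,1))"
  using assms by (intro eq_matI) (auto simp: mat2_def less2)

lemma row1_eta:
  assumes "M \<in> carrier_mat 1 2"
  shows "M = row1 (M$$(0,0)) (M$$(0,1))"
  using assms by (intro eq_matI) (auto simp: row1_def less2)

lemma one2: "(1\<^sub>m 2 :: 'a::semiring_1 mat) = mat2 1 0 0 1"
  by (rule eq_matI) (auto simp: mat2_def less2)

lemma mat2_eq_iff: "mat2 p q r s = mat2 p' q' r' s' \<longleftrightarrow> p = p' \<and> q = q' \<and> r = r' \<and> s = s'"
  by (auto simp: mat2_def mat_eq_iff less2)

lemma gen_sub:
  assumes "right_ideal I" "S \<subseteq> I"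
  shows "right_ideal_gen S \<subseteq> I"
  using assms unfolding right_ideal_gen_def by blast

lemma gen_mem:
  assumes "x \<in> S" shows "x \<in> right_ideal_gen S"
  using assms unfolding right_ideal_gen_def by blast


lemma ri_principal: "right_ideal {d * r | r. True}"
  unfolding right_ideal_def
proof (intro conjI ballI allI)
  show "0 \<in> {d * r |r. True}" by (rule CollectI, rule exI[of _ 0]) simp
next
  fix x y assume "x \<in> {d * r |r. True}" "y \<in> {d * r |r. True}"
  then obtain r s where "x = d*r" "y = d*s" by blast
  then have "x + y = d * (r + s)" by (simp add: distrib_left)
  then show "x + y \<in> {d * r |r. True}" by blast
next
  fix x assume "x \<in> {d * r |r. True}"
  then obtain r where "x = d*r" by blast
  then show "- x \<in> {d * r |r. True}" by (auto intro!: exI[of _ "-r"])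
next
  fix x t assume "x \<in> {d * r |r. True}"
  then obtain r where "x = d*r" by blast
  then show "x * t \<in> {d * r |r. True}" by (auto simp: mult.assoc)
qed

lemma ri_two: "right_ideal {a * r + b * s | r s. True}"
  unfolding right_ideal_def
proof (intro conjI ballI allI)
  show "0 \<in> {a * r + b * s | r s. True}" by (rule CollectI, rule exI[of _ 0], rule exI[of _ 0]) simp
next
  fix x y assume "x \<in> {a * r + b * s | r s. True}" "y \<in> {a * r + b * s | r s. True}"
  then obtain r s r' s' where "x = a*r + b*s" "y = a*r' + b*s'" by blast
  then have "x + y = a * (r + r') + b * (s + s')" by (simp add: algebra_simps)
  then show "x + y \<in> {a * r + b * s | r s. True}" by blast
next
  fix x assume "x \<in> {a * r + b * s | r s. True}"
  then obtain r s where "x = a*r + b*s" by blast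
  then have "- x = a * (-r) + b * (-s)" by simp
  then show "- x \<in> {a * r + b * s | r s. True}" by blast
next
  fix x t assume "x \<in> {a * r + b * s | r s. True}"
  then obtain r s where "x = a*r + b*s" by blast
  then have "x * t = a * (r*t) + b * (s*t)" by (simp add: algebra_simps)
  then show "x * t \<in> {a * r + b * s | r s. True}" by blast
qed

lemma bezout_two:
  assumes "bezout_ring TYPE('a::ring_1)"
  shows "\<exists>d a1 b1 x y. (a::'a) = d * a1 \<and> b = d * b1 \<and> d = a * x + b * y"
proof -
  obtain d where d: "right_ideal_gen {a,b} = right_ideal_gen {d}"
    using assms unfolding bezout_ring_def by (meson finite.emptyI finite.insertI)
  have "right_ideal_gen {d} \<subseteq> {d * r | r. True}"
    by (rule gen_sub[OF ri_principal]) (auto intro: exI[of _ 1])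
  moreover have "a \<in> right_ideal_gen {d}" "b \<in> right_ideal_gen {d}"
    using d gen_mem[of _ "{a,b}"] by auto
  ultimately obtain a1 b1 where "a = d * a1" "b = d * b1" by blast
  moreover have "right_ideal_gen {a,b} \<subseteq> {a * r + b * s | r s. True}"
  proof (rule gen_sub[OF ri_two])
    have "a = a * 1 + b * 0" "b = a * 0 + b * 1" by simp_all
    then show "{a, b} \<subseteq> {a * r + b * s | r s. True}" by blast
  qed
  moreover have "d \<in> right_ideal_gen {a,b}" using d gen_mem[of d "{d}"] by auto
  ultimately show ?thesis by blast
qed


lemma scal_row1:
  fixes a :: "'a::semiring_1"
  assumes "P \<in> carrier_mat 1 1"
  shows "P * row1 a b = row1 (P$$(0,0)*a) (P$$(0,0)*b)"
  using assms by (intro eq_matI) (auto simp: row1_def scalar_prod_def less2)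

lemma row1_nth: "row1 a b $$ (0,1) = b"
  by (simp add: row1_def)

lemma inv_dims:
  assumes "Q \<in> carrier_mat n n" "Q * B = 1\<^sub>m n" "B * Q = 1\<^sub>m (dim_row B)"
  shows "B \<in> carrier_mat n n"
proof -
  have "dim_col B = n" using arg_cong[OF assms(2), of dim_col] assms(1) by simp
  moreover have "dim_row B = n" using arg_cong[OF assms(3), of dim_col] assms(1) by simp
  ultimately show ?thesis by auto
qed

lemma hermite_row:
  assumes "hermite_ring TYPE('a::ring_1)"
  shows "\<exists>g00 g01 g10 g11 h00 h01 h10 h11. (\<alpha>::'a)*g01 + \<beta>*g11 = 0
     \<and> mat2 g00 g01 g10 g11 * mat2 h00 h01 h10 h11 = 1\<^sub>m 2
     \<and> mat2 h00 h01 h10 h11 * mat2 g00 g01 g10 g11 = 1\<^sub>m 2"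
proof -
  have "admits_diagonal_reduction (row1 \<alpha> \<beta>)"
  proof -
    have H: "\<forall>A::'a mat. A \<in> carrier_mat 1 2 \<longrightarrow> admits_diagonal_reduction A"
      using assms unfolding hermite_ring_def .
    show ?thesis by (rule H[rule_format, OF row1_carrier])
  qed
  then obtain P Q where P: "P \<in> carrier_mat 1 1" and Q: "Q \<in> carrier_mat 2 2"
    and iP: "invertible_mat P" and iQ: "invertible_mat Q"
    and dg: "diagonal_mat (P * row1 \<alpha> \<beta> * Q)"
  proof -
    have dr: "dim_row (row1 \<alpha> \<beta>) = 1" "dim_col (row1 \<alpha> \<beta>) = 2" by (simp_all add: row1_def)
    show ?thesis using that \<open>admits_diagonal_reduction (row1 \<alpha> \<beta>)\<close>
      unfolding admits_diagonal_reduction_def dr by blast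
  qed
  obtain B where B1: "Q * B = 1\<^sub>m 2" and B2: "B * Q = 1\<^sub>m (dim_row B)"
    using iQ Q unfolding invertible_mat_def inverts_mat_def by auto
  have Bc: "B \<in> carrier_mat 2 2" by (rule inv_dims[OF Q B1 B2])
  obtain C where C1: "P * C = 1\<^sub>m 1" and C2: "C * P = 1\<^sub>m (dim_row C)"
    using iP P unfolding invertible_mat_def inverts_mat_def by auto
  have Cc: "C \<in> carrier_mat 1 1" by (rule inv_dims[OF P C1 C2])
  have cp: "C$$(0,0) * P$$(0,0) = 1"
  proof -
    have "(C * P) $$ (0,0) = 1" using C2 Cc by simp
    then show ?thesis using Cc P by (simp add: scalar_prod_def)
  qed
  define g00 where "g00 = Q$$(0,0)"
  define g01 where "g01 = Q$$(0,1)"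
  define g10 where "g10 = Q$$(1,0)"
  define g11 where "g11 = Q$$(1,1)"
  define h00 where "h00 = B$$(0,0)"
  define h01 where "h01 = B$$(0,1)"
  define h10 where "h10 = B$$(1,0)"
  define h11 where "h11 = B$$(1,1)"
  have Qe: "Q = mat2 g00 g01 g10 g11" unfolding g00_def g01_def g10_def g11_def by (rule mat2_eta[OF Q])
  have Be: "B = mat2 h00 h01 h10 h11" unfolding h00_def h01_def h10_def h11_def by (rule mat2_eta[OF Bc])
  have z: "(P * row1 \<alpha> \<beta> * Q) $$ (0,1) = 0"
  proof -
    have "dim_row (P * row1 \<alpha> \<beta> * Q) = 1" "dim_col (P * row1 \<alpha> \<beta> * Q) = 2" using P Q by auto
    then show ?thesis using dg unfolding diagonal_mat_def by force
  qed
  have "P * row1 \<alpha> \<beta> * Q = row1 (P$$(0,0)*\<alpha>*g00 + P$$(0,0)*\<beta>*g10) (P$$(0,0)*\<alpha>*g01 + P$$(0,0)*\<beta>*g11)"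
    unfolding scal_row1[OF P] Qe row1_mult ..
  then have "P$$(0,0)*\<alpha>*g01 + P$$(0,0)*\<beta>*g11 = 0"
    using z by (simp only: row1_nth)
  then have "C$$(0,0) * (P$$(0,0)*\<alpha>*g01 + P$$(0,0)*\<beta>*g11) = 0" by simp
  then have "(C$$(0,0) * P$$(0,0))*\<alpha>*g01 + (C$$(0,0) * P$$(0,0))*\<beta>*g11 = 0"
    by (simp only: distrib_left mult.assoc)
  then have "\<alpha>*g01 + \<beta>*g11 = 0" using cp by (simp only: mult_1_left)
  moreover have "mat2 g00 g01 g10 g11 * mat2 h00 h01 h10 h11 = 1\<^sub>m 2" using B1 Qe Be by simp
  moreover have "mat2 h00 h01 h10 h11 * mat2 g00 g01 g10 g11 = 1\<^sub>m 2" using B2 Bc Qe Be by simp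
  ultimately show ?thesis
    by blast
qed


theorem proposition3p1:
  assumes "hermite_ring TYPE('a::ring_1)"
    and "bezout_ring TYPE('a fps)"
  shows "hermite_ring TYPE('a fps)"
  unfolding hermite_ring_def
proof (intro allI impI)
  fix A :: "'a fps mat" assume A: "A \<in> carrier_mat 1 2"
  define a where "a = A$$(0,0)"
  define b where "b = A$$(0,1)"
  have Ae: "A = row1 a b" unfolding a_def b_def by (rule row1_eta[OF A])
  obtain d a1 b1 x y where ha: "a = d * a1" and hb: "b = d * b1" and hd: "d = a * x + b * y"
    using bezout_two[OF assms(2)] by blast
  obtain g00 g01 g10 g11 h00 h01 h10 h11 where gz: "(fps_nth a1 0)*g01 + (fps_nth b1 0)*g11 = 0"
     and GH: "mat2 g00 g01 g10 g11 * mat2 h00 h01 h10 h11 = 1\<^sub>m 2"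
     and HG: "mat2 h00 h01 h10 h11 * mat2 g00 g01 g10 g11 = 1\<^sub>m 2"
    using hermite_row[OF assms(1), of "fps_nth a1 0" "fps_nth b1 0"] by blast
  have e1: "g00*h00 + g01*h10 = 1" "g00*h01+g01*h11 = 0" "g10*h00+g11*h10 = 0" "g10*h01+g11*h11 = 1"
    using GH by (simp_all add: mat2_mult one2 mat2_eq_iff)
  have e2: "h00*g00 + h01*g10 = 1" "h00*g01+h01*g11 = 0" "h10*g00+h11*g10 = 0" "h10*g01+h11*g11 = 1"
    using HG by (simp_all add: mat2_mult one2 mat2_eq_iff)
  define G00 where "G00 = fps_const g00"
  define G01 where "G01 = fps_const g01"
  define G10 where "G10 = fps_const g10"
  define G11 where "G11 = fps_const g11"
  define H00 where "H00 = fps_const h00"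
  define H01 where "H01 = fps_const h01"
  define H10 where "H10 = fps_const h10"
  define H11 where "H11 = fps_const h11"
  have E1: "G00*H00 + G01*H10 = 1" "G00*H01+G01*H11 = 0" "G10*H00+G11*H10 = 0" "G10*H01+G11*H11 = 1"
    unfolding G00_def G01_def G10_def G11_def H00_def H01_def H10_def H11_def
    by (simp_all add: e1)
  have E2: "H00*G00 + H01*G10 = 1" "H00*G01+H01*G11 = 0" "H10*G00+H11*G10 = 0" "H10*G01+H11*G11 = 1"
    unfolding G00_def G01_def G10_def G11_def H00_def H01_def H10_def H11_def
    by (simp_all add: e2)
  define a' where "a' = a*G00 + b*G10"
  define b' where "b' = a*G01 + b*G11"
  define b1' where "b1' = a1*G01 + b1*G11"
  have b'd: "b' = d * b1'" unfolding b'_def b1'_def ha hb by (simp add: distrib_left mult.assoc)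
  have b10: "fps_nth b1' 0 = 0" unfolding b1'_def G01_def G11_def using gz by simp
  define x' where "x' = H00*x + H01*y"
  define y' where "y' = H10*x + H11*y"
  have "a'*x' + b'*y' = a*((G00*H00+G01*H10)*x + (G00*H01+G01*H11)*y)
      + b*((G10*H00+G11*H10)*x + (G10*H01+G11*H11)*y)"
    unfolding a'_def b'_def x'_def y'_def by (simp add: algebra_simps)
  also have "\<dots> = d" using hd E1 by simp
  finally have dd: "d = a'*x' + b'*y'" by simp
  define u where "u = 1 - b1'*y'"
  have u0: "fps_nth u 0 * 1 = 1" unfolding u_def using b10 by simp
  define v where "v = fps_right_inverse u 1"
  have uv: "u * v = 1" unfolding v_def by (rule fps_right_inverse[OF u0])
  have du: "d * u = a' * x'"
  proof -
    have "d * u = d - d * b1' * y'" unfolding u_def by (simp add: algebra_simps)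
    also have "\<dots> = d - b' * y'" using b'd by simp
    also have "\<dots> = a' * x'" using dd by (metis add_diff_cancel)
    finally show ?thesis .
  qed
  have dv: "d = a' * (x' * v)"
  proof -
    have "d = d * (u * v)" using uv by simp
    also have "\<dots> = a' * (x' * v)" using du by (simp add: mult.assoc[symmetric])
    finally show ?thesis .
  qed
  define c where "c = x' * v * b1'"
  have bc: "b' = a' * c" unfolding c_def using b'd dv by (simp add: mult.assoc)
  define Q where "Q = mat2 G00 (G01 - G00*c) G10 (G11 - G10*c)"
  define Qi where "Qi = mat2 (H00 + c*H10) (H01 + c*H11) H10 H11"
  have QQi: "Q * Qi = 1\<^sub>m 2"
  proof -
    have 1: "G00 * (H00 + c * H10) + (G01 - G00 * c) * H10 = G00*H00 + G01*H10"
      by (simp add: algebra_simps)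
    have 2: "G00 * (H01 + c * H11) + (G01 - G00 * c) * H11 = G00*H01+G01*H11"
      by (simp add: algebra_simps)
    have 3: "G10 * (H00 + c * H10) + (G11 - G10 * c) * H10 = G10*H00+G11*H10"
      by (simp add: algebra_simps)
    have 4: "G10 * (H01 + c * H11) + (G11 - G10 * c) * H11 = G10*H01+G11*H11"
      by (simp add: algebra_simps)
    show ?thesis unfolding Q_def Qi_def mat2_mult one2 mat2_eq_iff 1 2 3 4 E1 by simp
  qed
  have QiQ: "Qi * Q = 1\<^sub>m 2"
  proof -
    have 1: "(H00 + c * H10) * G00 + (H01 + c * H11) * G10 = (H00*G00 + H01*G10) + c*(H10*G00+H11*G10)"
      by (simp add: algebra_simps)
    have 2: "(H00 + c * H10) * (G01 - G00 * c) + (H01 + c * H11) * (G11 - G10 * c)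
       = (H00*G01+H01*G11) + c*(H10*G01+H11*G11) - (H00*G00 + H01*G10)*c - c*(H10*G00+H11*G10)*c"
      by (simp add: algebra_simps)
    have 3: "H10 * (G01 - G00 * c) + H11 * (G11 - G10 * c) = (H10*G01+H11*G11) - (H10*G00+H11*G10)*c"
      by (simp add: algebra_simps)
    show ?thesis unfolding Q_def Qi_def mat2_mult one2 mat2_eq_iff 1 2 3 E2 by simp
  qed
  have AQ: "A * Q = row1 a' 0"
  proof -
    have "a * (G01 - G00 * c) + b * (G11 - G10 * c) = b' - a' * c"
      unfolding a'_def b'_def by (simp add: algebra_simps)
    then show ?thesis unfolding Ae Q_def row1_mult a'_def[symmetric] using bc by simp
  qed
  show "admits_diagonal_reduction A"
    unfolding admits_diagonal_reduction_def
  proof (intro exI conjI)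
    show "1\<^sub>m 1 \<in> carrier_mat (dim_row A) (dim_row A)" using A by simp
    show "Q \<in> carrier_mat (dim_col A) (dim_col A)" using A by (simp add: Q_def)
    show "invertible_mat (1\<^sub>m 1 :: 'a fps mat)"
      unfolding invertible_mat_def inverts_mat_def square_mat.simps
      by (intro conjI exI[of _ "1\<^sub>m 1"]) simp_all
    show "invertible_mat Q"
      unfolding invertible_mat_def inverts_mat_def using QQi QiQ by (auto simp: Q_def Qi_def)
    show "diagonal_mat (1\<^sub>m 1 * A * Q)"
      using A AQ unfolding diagonal_mat_def by (auto simp: row1_def less2)
  qed
qed

end
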